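(* There is an absolute constant $C>0$ such that the following holds. Let $0<\varepsilon\le 1$ and let $S$ and $T$ be configurations of $n\ge 2$ points each whose smallest enclosing discs have the same center, such that any two distinct points of $S$, and any two distinct points of $T$, are at distance at least $2+\varepsilon$. Then for every direction $\delta$ there exists a translation $\vec v=\lambda\delta$ with $\lambda\ge 0$ such that the unlabeled problem from $S$ to $T+\vec v$ is feasible, $|\vec v|\le C\,(r(S)+r(T))/\sqrt{\varepsilon}$, and $r(S\cup(T+\vec v))\le C\,(r(S)+r(T))/\sqrt{\varepsilon}$.
   Context: For $p\in\mathbb R^2$, $D(p)$ is the open unit disc centered at $p$. $r(P)$ is the radius of the smallest closed disc containing the point set $P$. The unlabeled problem from $S$ to $T'$ is feasible if there exist a bijection $M:S\to T'$ and an ordering $s_1,\dots,s_n$ of $S$ such that for each $i$ the region $\mathrm{conv}(D(s_i)\cup D(M(s_i)))$ swept by translating $D(s_i)$ straight to $M(s_i)$ is disjoint from $D(s_j)$ for all $j>i$ and from $D(M(s_j))$ for all $j<i$. *)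

theory Defs
  imports "HOL-Analysis.Analysis"
begin

type_synonym pt = "real ^ 2"

definition udisc :: "pt \<Rightarrow> pt set" where
  "udisc p = ball p 1"

definition enc_radius :: "pt set \<Rightarrow> real" where
  "enc_radius P = Inf {r. \<exists>c. P \<subseteq> cball c r}"

definition enc_center :: "pt set \<Rightarrow> pt \<Rightarrow> bool" where
  "enc_center P c \<longleftrightarrow> P \<subseteq> cball c (enc_radius P)"

definition unlabeled_feasible :: "pt set \<Rightarrow> pt set \<Rightarrow> bool" where
  "unlabeled_feasible S T' \<longleftrightarrow>
     (\<exists>M ss. bij_betw M S T' \<and> distinct ss \<and> set ss = S \<and>
        (\<forall>i < length ss.
           (\<forall>j. i < j \<and> j < length ss \<longrightarrow>
              convex hull (udisc (ss ! i) \<union> udisc (M (ss ! i))) \<inter> udisc (ss ! j) = {}) \<and>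
           (\<forall>j < i.
              convex hull (udisc (ss ! i) \<union> udisc (M (ss ! i))) \<inter> udisc (M (ss ! j)) = {})))"

end

theory Submission
  imports Defs
begin

lemma alg:
  fixes A B D e mu :: real
  assumes A: "A \<ge> (2+e)^2" and B: "B^2 \<le> A * (e/2) * D \<or> B \<le> 0" and D: "D > 0" and e: "0<e" "e\<le>1" and mu: "mu \<ge> 0"
  shows "A - 2*mu*B + mu^2*D \<ge> 4"
proof (cases "B \<le> 0")
  case True
  have "mu*B \<le> 0" using True mu by (simp add: mult_nonneg_nonpos)
  moreover have "mu^2*D \<ge> 0" using D by simp
  moreover have "(2+e)^2 \<ge> (4::real)"
  proof -
    have "(2+e)^2 = 4+4*e+e^2" by (simp add: power2_eq_square algebra_simps)
    thus ?thesis using e by (smt (verit) zero_le_power2)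
  qed
  ultimately show ?thesis using A by linarith
next
  case False
  hence B2: "B^2 \<le> A * (e/2) * D" using B by simp
  have h1: "D*(A - 2*mu*B + mu^2*D) = (mu*D - B)^2 + (A*D - B^2)" by (simp add: algebra_simps power2_eq_square)
  have "A*(1-e/2) \<ge> 4"
  proof -
    have "(2+e)^2*(1-e/2) \<ge> 4" 
    proof -
      have "(2+e)^2*(1-e/2) = 4 + e*(2 - e - e*e/2)" by (simp add: power2_eq_square algebra_simps)
      moreover have "e*e \<le> 1" using e by (metis less_eq_real_def mult_le_one)
      hence "2 - e - e*e/2 \<ge> 0" using e by linarith
      ultimately show ?thesis using e by simp
    qed
    moreover have "A*(1-e/2) \<ge> (2+e)^2*(1-e/2)" using A e by (intro mult_right_mono) auto
    ultimately show ?thesis by linarith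
  qed
  hence "A*(1-e/2)*D \<ge> 4*D" using D by (intro mult_right_mono) auto
  moreover have "A*(1-e/2)*D = A*D - A*(e/2)*D" by (simp add: algebra_simps)
  ultimately have "A*D - B^2 \<ge> 4*D" using B2 by linarith
  moreover have "(mu*D - B)^2 \<ge> 0" by simp
  ultimately have "D*(A - 2*mu*B + mu^2*D) \<ge> D*4" using h1 by linarith
  thus ?thesis using D by simp
qed

lemma G:
  fixes u w dl :: "real^2"
  assumes dl: "norm dl = 1" and w: "norm w \<le> R" and R: "R > 0" and e: "0<e" "e\<le>1"
    and u: "norm u \<ge> 2+e" and ud: "inner u dl \<le> 0" and mu: "mu \<ge> 0" and lam: "lam = R + 2*R/sqrt e"
  shows "norm (u - mu *\<^sub>R (lam *\<^sub>R dl + w)) \<ge> 2"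
proof -
  define d where "d = lam *\<^sub>R dl + w"
  define A where "A = (norm u)^2"
  define B where "B = inner u d"
  define D where "D = (norm d)^2"
  have se: "sqrt e > 0" using e by simp
  have lam0: "lam \<ge> 0" using lam R se by simp
  have eq: "(norm (u - mu *\<^sub>R d))^2 = A - 2*mu*B + mu^2*D"
    unfolding A_def B_def D_def power2_norm_eq_inner
    by (simp add: inner_diff_left inner_diff_right inner_commute algebra_simps power2_eq_square)
  have "B = lam * inner u dl + inner u w" unfolding B_def d_def by (simp add: inner_add_right)
  moreover have "lam * inner u dl \<le> 0" using lam0 ud by (simp add: mult_nonneg_nonpos)
  moreover have "inner u w \<le> norm u * R"
    using norm_cauchy_schwarz[of u w] w mult_left_mono[OF w norm_ge_zero[of u]] by linarith
  ultimately have Ble: "B \<le> norm u * R" by linarith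
  have "norm (lam *\<^sub>R dl) \<le> norm d + norm w" unfolding d_def
    by (metis add_diff_cancel_right' norm_triangle_ineq4)
  hence "lam \<le> norm d + R" using dl lam0 w by simp
  hence nd: "norm d \<ge> 2*R/sqrt e" using lam by simp
  have pos: "2*R/sqrt e > 0" using R se by simp
  have D: "D \<ge> (2*R/sqrt e)^2" unfolding D_def using nd pos by (intro power_mono) auto
  have "(2*R/sqrt e)^2 = 4*R^2/e" using e by (simp add: power_divide power_mult_distrib)
  hence D2: "R^2 \<le> (e/2)*D" using D e
  proof -
    have "4 * R^2 \<le> D * e" using D \<open>(2*R/sqrt e)^2 = 4*R^2/e\<close> e by (simp add: field_simps)
    moreover have "R^2 \<ge> 0" by simp
    ultimately have "2 * R^2 \<le> D * e" by linarith
    thus ?thesis by (simp add: field_simps)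
  qed
  have Dpos: "D > 0" using D pos by (smt (verit) zero_less_power)
  have Bcase: "B^2 \<le> A * (e/2) * D \<or> B \<le> 0"
  proof (cases "B \<le> 0")
    case False
    hence "B^2 \<le> (norm u * R)^2" using Ble by (intro power_mono) auto
    also have "\<dots> = A * R^2" unfolding A_def by (simp add: power_mult_distrib)
    also have "\<dots> \<le> A * ((e/2)*D)" using D2 unfolding A_def by (intro mult_left_mono) auto
    finally show ?thesis by (simp add: mult.assoc)
  qed simp
  have "A \<ge> (2+e)^2" unfolding A_def using u e by (intro power_mono) auto
  from alg[OF this Bcase Dpos e mu] eq have "(norm (u - mu *\<^sub>R d))^2 \<ge> 2^2" by simp
  hence "norm (u - mu *\<^sub>R d) \<ge> 2" by (rule power2_le_imp_le) simp
  thus ?thesis unfolding d_def .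
qed

lemma stad:
  fixes a b p :: "real^2"
  assumes "\<forall>mu\<in>{0..1}. dist p (a + mu *\<^sub>R (b - a)) \<ge> 2"
  shows "convex hull (ball a 1 \<union> ball b 1) \<inter> ball p 1 = {}"
proof -
  define K where "K = (\<Union>x\<in>closed_segment a b. \<Union>y\<in>ball (0::real^2) 1. {x + y})"
  have cK: "convex K" unfolding K_def by (intro convex_sums) auto
  have "ball a 1 \<subseteq> K"
  proof
    fix z assume "z \<in> ball a 1"
    hence "z - a \<in> ball 0 1" by (simp add: dist_norm norm_minus_commute)
    moreover have "a \<in> closed_segment a b" by simp
    ultimately show "z \<in> K" unfolding K_def
      by (intro UN_I[where a=a and A="closed_segment a b"] UN_I[where a="z - a"]) auto
  qed
  moreover have "ball b 1 \<subseteq> K"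
  proof
    fix z assume "z \<in> ball b 1"
    hence "z - b \<in> ball 0 1" by (simp add: dist_norm norm_minus_commute)
    moreover have "b \<in> closed_segment a b" by simp
    ultimately show "z \<in> K" unfolding K_def
      by (intro UN_I[where a=b and A="closed_segment a b"] UN_I[where a="z - b"]) auto
  qed
  ultimately have "convex hull (ball a 1 \<union> ball b 1) \<subseteq> K" using cK by (intro hull_minimal) auto
  moreover have "K \<inter> ball p 1 = {}"
  proof (rule ccontr)
    assume "K \<inter> ball p 1 \<noteq> {}"
    then obtain x y where x: "x \<in> closed_segment a b" and y: "norm y < 1" and xy: "dist p (x+y) < 1"
      unfolding K_def by auto
    obtain u where u: "0 \<le> u" "u \<le> 1" "x = (1 - u) *\<^sub>R a + u *\<^sub>R b" using x in_segment(1) by blast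
    have "x = a + u *\<^sub>R (b - a)" using u by (simp add: algebra_simps)
    hence "dist p x \<ge> 2" using assms u by auto
    moreover have "dist p x \<le> dist p (x+y) + norm y"
      by (metis add_diff_cancel_left' dist_commute dist_norm dist_triangle2)
    ultimately show False using y xy by linarith
  qed
  ultimately show ?thesis by blast
qed

lemma sorted_list_ex:
  fixes f :: "'a \<Rightarrow> real"
  assumes "finite A"
  shows "\<exists>xs. distinct xs \<and> set xs = A \<and> (\<forall>i j. i \<le> j \<and> j < length xs \<longrightarrow> f (xs!j) \<le> f (xs!i))"
proof -
  obtain ys where ys: "set ys = A" "distinct ys" using finite_distinct_list[OF assms] by blast
  define xs where "xs = sort_key (\<lambda>x. - f x) ys"
  have "sorted (map (\<lambda>x. - f x) xs)" unfolding xs_def by simp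
  hence "\<forall>i j. i \<le> j \<and> j < length xs \<longrightarrow> f (xs!j) \<le> f (xs!i)"
    using sorted_nth_mono by fastforce
  moreover have "distinct xs" "set xs = A" using ys unfolding xs_def by auto
  ultimately show ?thesis by blast
qed

lemma feas:
  fixes ss tt :: "pt list"
  assumes d1: "distinct ss" and d2: "distinct tt" and len: "length ss = length tt"
    and g1: "\<forall>i j. i<j \<and> j<length ss \<longrightarrow> (\<forall>mu\<in>{0..1}. dist (ss!j) (ss!i + mu *\<^sub>R (tt!i - ss!i)) \<ge> 2)"
    and g2: "\<forall>i j. j<i \<and> i<length ss \<longrightarrow> (\<forall>mu\<in>{0..1}. dist (tt!j) (ss!i + mu *\<^sub>R (tt!i - ss!i)) \<ge> 2)"
  shows "unlabeled_feasible (set ss) (set tt)"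
proof -
  define M where "M = (\<lambda>x. the (map_of (zip ss tt) x))"
  have Mi: "M (ss!i) = tt!i" if "i < length ss" for i
    unfolding M_def using map_of_zip_nth[OF len d1] that len by simp
  have inj: "inj_on M (set ss)"
  proof (rule inj_onI)
    fix x y assume "x \<in> set ss" "y \<in> set ss" "M x = M y"
    then obtain i k where "i < length ss" "k < length ss" "x = ss!i" "y = ss!k" "tt!i = tt!k"
      by (metis in_set_conv_nth Mi)
    thus "x = y" using d2 len by (simp add: nth_eq_iff_index_eq)
  qed
  have img: "M ` set ss = set tt"
  proof
    show "M ` set ss \<subseteq> set tt" using Mi len by (auto simp: in_set_conv_nth) (metis nth_mem)
    show "set tt \<subseteq> M ` set ss"
    proof
      fix t assume "t \<in> set tt"
      then obtain i where "i < length tt" "t = tt!i" by (auto simp: in_set_conv_nth)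
      thus "t \<in> M ` set ss" using Mi len by (metis image_eqI nth_mem)
    qed
  qed
  have bij: "bij_betw M (set ss) (set tt)" using inj img by (simp add: bij_betw_def)
  have cond: "\<forall>i < length ss.
           (\<forall>j. i < j \<and> j < length ss \<longrightarrow>
              convex hull (udisc (ss ! i) \<union> udisc (M (ss ! i))) \<inter> udisc (ss ! j) = {}) \<and>
           (\<forall>j < i.
              convex hull (udisc (ss ! i) \<union> udisc (M (ss ! i))) \<inter> udisc (M (ss ! j)) = {})"
  proof (intro allI impI conjI)
    fix i j assume i: "i < length ss" and ij: "i < j \<and> j < length ss"
    show "convex hull (udisc (ss ! i) \<union> udisc (M (ss ! i))) \<inter> udisc (ss ! j) = {}"
      unfolding udisc_def Mi[OF i] using g1 ij by (intro stad) blast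
  next
    fix i j assume i: "i < length ss" and ij: "j < i"
    have j: "j < length ss" using i ij by simp
    show "convex hull (udisc (ss ! i) \<union> udisc (M (ss ! i))) \<inter> udisc (M (ss ! j)) = {}"
      unfolding udisc_def Mi[OF i] Mi[OF j] using g2 ij i by (intro stad) blast
  qed
  show ?thesis unfolding unlabeled_feasible_def using bij d1 cond by blast
qed
lemma two_pts:
  assumes "finite S" "card S \<ge> 2"
  shows "\<exists>p q. p \<in> S \<and> q \<in> S \<and> p \<noteq> q"
proof -
  have "S \<noteq> {}" using assms by auto
  then obtain p where p: "p \<in> S" by blast
  have "card (S - {p}) \<ge> 1" using card_Diff_singleton[OF p] assms by simp
  hence "S - {p} \<noteq> {}" by (metis card.empty not_one_le_zero)
  then obtain q where "q \<in> S - {p}" by blast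
  thus ?thesis using p by blast
qed

lemma rad_ge1:
  fixes S :: "pt set"
  assumes "finite S" "card S \<ge> 2" "enc_center S c" "\<forall>p\<in>S. \<forall>q\<in>S. p \<noteq> q \<longrightarrow> dist p q \<ge> 2 + e" "e > 0"
  shows "enc_radius S \<ge> 1"
proof -
  obtain p q where pq: "p \<in> S" "q \<in> S" "p \<noteq> q" using two_pts assms by blast
  have "{r. \<exists>c. S \<subseteq> cball c r} \<noteq> {}" using assms(3) unfolding enc_center_def by blast
  moreover have "\<forall>r\<in>{r. \<exists>c. S \<subseteq> cball c r}. 1 \<le> r"
  proof
    fix r assume "r \<in> {r. \<exists>c. S \<subseteq> cball c r}"
    then obtain c' where "S \<subseteq> cball c' r" by blast
    hence "dist c' p \<le> r" "dist c' q \<le> r" using pq by auto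
    moreover have "dist p q \<le> dist c' p + dist c' q" using dist_triangle[of p q c'] by (simp add: dist_commute)
    moreover have "dist p q \<ge> 2 + e" using assms pq by blast
    ultimately show "1 \<le> r" using assms by linarith
  qed
  ultimately show ?thesis unfolding enc_radius_def by (intro cInf_greatest) auto
qed

lemma main:
  fixes S T :: "pt set" and \<delta> :: pt
  assumes eps: "0 < e" "e \<le> 1" and n: "n \<ge> 2" and fin: "finite S" "finite T" and card: "card S = n" "card T = n"
    and cS: "enc_center S c" and cT: "enc_center T c"
    and sepS: "\<forall>p\<in>S. \<forall>q\<in>S. p \<noteq> q \<longrightarrow> dist p q \<ge> 2 + e"
    and sepT: "\<forall>p\<in>T. \<forall>q\<in>T. p \<noteq> q \<longrightarrow> dist p q \<ge> 2 + e"
    and dl: "norm \<delta> = 1"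
  shows "\<exists>lam\<ge>0. let v = lam *\<^sub>R \<delta>; T' = (\<lambda>t. t + v) ` T in
             unlabeled_feasible S T' \<and>
             norm v \<le> 4 * (enc_radius S + enc_radius T) / sqrt e \<and>
             enc_radius (S \<union> T') \<le> 4 * (enc_radius S + enc_radius T) / sqrt e"
proof -
  define R where "R = enc_radius S + enc_radius T"
  have rS: "enc_radius S \<ge> 1" using rad_ge1[OF fin(1) _ cS sepS eps(1)] card n by simp
  have rT: "enc_radius T \<ge> 1" using rad_ge1[OF fin(2) _ cT sepT eps(1)] card n by simp
  have R: "R > 0" unfolding R_def using rS rT by simp
  have se: "sqrt e > 0" "sqrt e \<le> 1" using eps by auto
  define lam where "lam = R + 2*R/sqrt e"
  define v where "v = lam *\<^sub>R \<delta>"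
  define T' where "T' = (\<lambda>t. t + v) ` T"
  have lam0: "lam \<ge> 0" unfolding lam_def using R se by simp
  have Rle: "R \<le> R / sqrt e" using R se by (simp add: le_divide_eq)
  have nv: "norm v = lam" unfolding v_def using dl lam0 by simp
  have q: "R / sqrt e \<ge> 0" using R se by simp
  have q3: "3*R/sqrt e = R/sqrt e + 2*R/sqrt e" "4*R/sqrt e = R/sqrt e + 3*R/sqrt e" by (simp_all add: field_simps)
  have nv2: "norm v \<le> 4 * R / sqrt e" using nv Rle q q3 unfolding lam_def by linarith
  have inS: "S \<subseteq> cball c (enc_radius S)" using cS unfolding enc_center_def .
  have inT: "T \<subseteq> cball c (enc_radius T)" using cT unfolding enc_center_def .
  have sub: "S \<union> T' \<subseteq> cball c (R + lam)"
  proof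
    fix x assume "x \<in> S \<union> T'"
    then consider "x \<in> S" | t where "t \<in> T" "x = t + v" unfolding T'_def by blast
    thus "x \<in> cball c (R + lam)"
    proof cases
      case 1 thus ?thesis using inS rT lam0 unfolding R_def by force
    next
      case 2
      have "dist t x = norm v" using 2 by (simp add: dist_norm)
      hence "dist c x \<le> dist c t + norm v" using dist_triangle[of c x t] by simp
      moreover have "dist c t \<le> enc_radius T" using 2 inT by auto
      ultimately show ?thesis using nv rS unfolding R_def by simp
    qed
  qed
  have "enc_radius (S \<union> T') \<le> R + lam"
    unfolding enc_radius_def
  proof (rule cInf_lower)
    show "R + lam \<in> {r. \<exists>c. S \<union> T' \<subseteq> cball c r}" using sub by blast
    obtain p where p: "p \<in> S" using two_pts fin card n by blast
    show "bdd_below {r. \<exists>c. S \<union> T' \<subseteq> cball c r}"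
    proof (rule bdd_belowI[of _ 0])
      fix r assume "r \<in> {r. \<exists>c. S \<union> T' \<subseteq> cball c r}"
      then obtain c' where "S \<union> T' \<subseteq> cball c' r" by blast
      hence "dist c' p \<le> r" using p by auto
      moreover have "0 \<le> dist c' p" by simp
      ultimately show "0 \<le> r" by linarith
    qed
  qed
  moreover have "R + lam \<le> 4 * R / sqrt e" using Rle q q3 unfolding lam_def by linarith
  ultimately have er: "enc_radius (S \<union> T') \<le> 4 * R / sqrt e" by linarith
  obtain ss where ss: "distinct ss" "set ss = S" "\<forall>i j. i \<le> j \<and> j < length ss \<longrightarrow> inner (ss!j) \<delta> \<le> inner (ss!i) \<delta>"
    using sorted_list_ex[OF fin(1), of "\<lambda>x. inner x \<delta>"] by blast
  obtain tt where tt: "distinct tt" "set tt = T" "\<forall>i j. i \<le> j \<and> j < length tt \<longrightarrow> inner (tt!j) \<delta> \<le> inner (tt!i) \<delta>"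
    using sorted_list_ex[OF fin(2), of "\<lambda>x. inner x \<delta>"] by blast
  have lss: "length ss = n" using distinct_card[OF ss(1)] ss(2) card by simp
  have ltt: "length tt = n" using distinct_card[OF tt(1)] tt(2) card by simp
  define tt' where "tt' = map (\<lambda>t. t + v) tt"
  have d': "distinct tt'" unfolding tt'_def using tt(1) by (simp add: distinct_map inj_on_def)
  have st': "set tt' = T'" unfolding tt'_def T'_def using tt(2) by simp
  have ltt': "length tt' = n" unfolding tt'_def using ltt by simp
  have nth': "tt'!i = tt!i + v" if "i < n" for i unfolding tt'_def using that ltt by simp
  have wR: "norm (tt!i - ss!i) \<le> R" if "i < n" for i
  proof -
    have "ss!i \<in> S" "tt!i \<in> T" using that lss ltt ss(2) tt(2) nth_mem by auto
    hence "dist c (ss!i) \<le> enc_radius S" "dist c (tt!i) \<le> enc_radius T" using inS inT by auto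
    moreover have "norm (tt!i - ss!i) \<le> dist c (ss!i) + dist c (tt!i)"
      using dist_triangle[of "tt!i" "ss!i" c] by (simp add: dist_norm norm_minus_commute dist_commute)
    ultimately show ?thesis unfolding R_def by linarith
  qed
  have dec: "tt'!i - ss!i = lam *\<^sub>R \<delta> + (tt!i - ss!i)" if "i < n" for i
    using nth'[OF that] unfolding v_def by simp
  have g1: "\<forall>i j. i<j \<and> j<length ss \<longrightarrow> (\<forall>mu\<in>{0..1}. dist (ss!j) (ss!i + mu *\<^sub>R (tt'!i - ss!i)) \<ge> 2)"
  proof (intro allI impI ballI)
    fix i j mu assume ij: "i<j \<and> j<length ss" and mu: "mu \<in> {0..(1::real)}"
    have i: "i < n" using ij lss by simp
    have "ss!j \<noteq> ss!i" using nth_eq_iff_index_eq[OF ss(1)] ij by auto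
    moreover have "ss!j \<in> S" "ss!i \<in> S" using ij ss(2) nth_mem by auto
    ultimately have "norm (ss!j - ss!i) \<ge> 2 + e" using sepS by (simp add: dist_norm)
    moreover have "inner (ss!j - ss!i) \<delta> \<le> 0" using ss(3) ij by (simp add: inner_diff_left)
    ultimately have "norm ((ss!j - ss!i) - mu *\<^sub>R (lam *\<^sub>R \<delta> + (tt!i - ss!i))) \<ge> 2"
      using G[OF dl wR[OF i] R eps _ _ _ lam_def] mu by auto
    moreover have eqv: "ss!j - (ss!i + mu *\<^sub>R (tt'!i - ss!i)) = (ss!j - ss!i) - mu *\<^sub>R (lam *\<^sub>R \<delta> + (tt!i - ss!i))"
      using dec[OF i] by simp
    ultimately show "dist (ss!j) (ss!i + mu *\<^sub>R (tt'!i - ss!i)) \<ge> 2" unfolding dist_norm eqv by blast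
  qed
  have g2: "\<forall>i j. j<i \<and> i<length ss \<longrightarrow> (\<forall>mu\<in>{0..1}. dist (tt'!j) (ss!i + mu *\<^sub>R (tt'!i - ss!i)) \<ge> 2)"
  proof (intro allI impI ballI)
    fix i j mu assume ij: "j<i \<and> i<length ss" and mu: "mu \<in> {0..(1::real)}"
    have i: "i < n" and j: "j < n" using ij lss by auto
    have "tt!j \<noteq> tt!i" using nth_eq_iff_index_eq[OF tt(1)] ij lss ltt by auto
    moreover have "tt!j \<in> T" "tt!i \<in> T" using ij tt(2) nth_mem lss ltt by auto
    ultimately have f1: "norm (tt!j - tt!i) \<ge> 2 + e" using sepT by (simp add: dist_norm)
    have f2: "inner (tt!j - tt!i) (-\<delta>) \<le> 0" using tt(3) ij lss ltt by (simp add: inner_diff_left)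
    have f3: "norm (ss!i - tt!i) \<le> R" using wR[OF i] by (simp add: norm_minus_commute)
    have f4: "norm (-\<delta>) = 1" using dl by simp
    have f5: "1 - mu \<ge> 0" using mu by simp
    have "norm ((tt!j - tt!i) - (1-mu) *\<^sub>R (lam *\<^sub>R (-\<delta>) + (ss!i - tt!i))) \<ge> 2"
      by (rule G[OF f4 f3 R eps f1 f2 f5 lam_def])
    moreover have eqw: "tt'!j - (ss!i + mu *\<^sub>R (tt'!i - ss!i)) = (tt!j - tt!i) - (1-mu) *\<^sub>R (lam *\<^sub>R (-\<delta>) + (ss!i - tt!i))"
      using dec[OF i] nth'[OF j] nth'[OF i] unfolding v_def by (simp add: algebra_simps)
    ultimately show "dist (tt'!j) (ss!i + mu *\<^sub>R (tt'!i - ss!i)) \<ge> 2" unfolding dist_norm eqw by blast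
  qed
  have "unlabeled_feasible (set ss) (set tt')"
    using feas[OF ss(1) d'] lss ltt' g1 g2 by simp
  hence "unlabeled_feasible S T'" using ss(2) st' by simp
  thus ?thesis using lam0 nv2 er unfolding R_def T'_def v_def Let_def by blast
qed

theorem mainTheorem8:
  shows "\<exists>C>0. \<forall>(\<epsilon>::real) (S::pt set) (T::pt set) (n::nat) c.
    0 < \<epsilon> \<and> \<epsilon> \<le> 1 \<and> n \<ge> 2 \<and> finite S \<and> finite T \<and> card S = n \<and> card T = n \<and>
    enc_center S c \<and> enc_center T c \<and>
    (\<forall>p\<in>S. \<forall>q\<in>S. p \<noteq> q \<longrightarrow> dist p q \<ge> 2 + \<epsilon>) \<and>
    (\<forall>p\<in>T. \<forall>q\<in>T. p \<noteq> q \<longrightarrow> dist p q \<ge> 2 + \<epsilon>)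
    \<longrightarrow> (\<forall>\<delta>::pt. norm \<delta> = 1 \<longrightarrow>
          (\<exists>lam\<ge>0. let v = lam *\<^sub>R \<delta>; T' = (\<lambda>t. t + v) ` T in
             unlabeled_feasible S T' \<and>
             norm v \<le> C * (enc_radius S + enc_radius T) / sqrt \<epsilon> \<and>
             enc_radius (S \<union> T') \<le> C * (enc_radius S + enc_radius T) / sqrt \<epsilon>))"
proof (rule exI[of _ "4::real"], intro conjI allI impI)
  fix e :: real and S T :: "pt set" and n :: nat and c :: pt and \<delta> :: pt
  assume H: "0 < e \<and> e \<le> 1 \<and> n \<ge> 2 \<and> finite S \<and> finite T \<and> card S = n \<and> card T = n \<and>
    enc_center S c \<and> enc_center T c \<and>
    (\<forall>p\<in>S. \<forall>q\<in>S. p \<noteq> q \<longrightarrow> dist p q \<ge> 2 + e) \<and>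
    (\<forall>p\<in>T. \<forall>q\<in>T. p \<noteq> q \<longrightarrow> dist p q \<ge> 2 + e)"
    and dl: "norm \<delta> = 1"
  show "\<exists>lam\<ge>0. let v = lam *\<^sub>R \<delta>; T' = (\<lambda>t. t + v) ` T in
             unlabeled_feasible S T' \<and>
             norm v \<le> 4 * (enc_radius S + enc_radius T) / sqrt e \<and>
             enc_radius (S \<union> T') \<le> 4 * (enc_radius S + enc_radius T) / sqrt e"
    using H dl by (intro main[where n=n and c=c]) auto
qed simp

end
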